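(* Let $\varphi(t,a,v)$ solve the non-autonomous first passage time problem (NFPT) defined in the context, let $P(t,a)=\int_{-\infty}^1\varphi(t,a,v)\,dv>0$, $ISI(t,a)=-\frac{\sigma^2}{2}\partial_v\varphi(t,a,1)$, and define the hazard rate $S(t,a)=ISI(t,a)/P(t,a)$. Let $n(t,a)$ solve the age-structured system $$\partial_t n(t,a)+\partial_a n(t,a)+S(t,a)n(t,a)=0,\qquad n(t,0)=\int_0^\infty S(t,a)n(t,a)\,da.$$ Then $$\pi(t,a,v)=\frac{\varphi(t,a,v)}{P(t,a)}\,n(t,a)$$ satisfies the equation $\partial_t\pi+\partial_a\pi+\partial_v[(\mu(t)-v)\pi]-\frac{\sigma^2}{2}\partial_v^2\pi=0$, the absorbing condition $\pi(t,a,1)=0$, the no-flux condition $\lim_{v\to-\infty}[(v-\mu(t))\pi+\frac{\sigma^2}{2}\partial_v\pi]=0$, and the reset condition $\pi(t,0,v)=\delta(v-v_r)\,r(t)$ with $r(t)=\int_0^\infty S(t,a)n(t,a)\,da=\int_0^\infty\rho(t,a)\,da$, where $\rho(t,a)=-\frac{\sigma^2}{2}\partial_v\pi(t,a,1)$; i.e. $\pi$ solves the age-and-potential system with time-dependent stimulus $\mu(t)$.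
   Context: Fix $\sigma>0$, a reset potential $v_r<1$ and a time-dependent stimulus $\mu:[0,\infty)\to\mathbb R$. The non-autonomous first passage time problem (NFPT): find $\varphi(t,a,v)$, $t>0$, $a>0$, $v<1$, such that $$\partial_t\varphi+\partial_a\varphi+\partial_v\big[(\mu(t)-v)\varphi\big]-\frac{\sigma^2}{2}\partial_v^2\varphi=0,$$ $\varphi(t,0,v)=\delta(v-v_r)$, $\varphi(t,a,1)=0$, $\lim_{v\to-\infty}\big[(v-\mu(t))\varphi+\frac{\sigma^2}{2}\partial_v\varphi\big]=0$, and $\varphi(0,a,v)=\varphi_0(a,v)$, where $\varphi_0$ is the solution of the autonomous first passage time problem with constant stimulus $\mu(0)$: $\partial_a\varphi_0+\partial_v[(\mu(0)-v)\varphi_0]-\frac{\sigma^2}{2}\partial_v^2\varphi_0=0$, $\varphi_0(0,v)=\delta(v-v_r)$, $\varphi_0(a,1)=0$, no-flux condition at $v\to-\infty$. *)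

theory Defs
  imports "HOL-Analysis.Analysis"
begin

definition d_t :: "(real \<Rightarrow> real \<Rightarrow> real \<Rightarrow> real) \<Rightarrow> real \<Rightarrow> real \<Rightarrow> real \<Rightarrow> real" where
  "d_t f t a v = deriv (\<lambda>s. f s a v) t"

definition d_a :: "(real \<Rightarrow> real \<Rightarrow> real \<Rightarrow> real) \<Rightarrow> real \<Rightarrow> real \<Rightarrow> real \<Rightarrow> real" where
  "d_a f t a v = deriv (\<lambda>b. f t b v) a"

definition d_v :: "(real \<Rightarrow> real \<Rightarrow> real \<Rightarrow> real) \<Rightarrow> real \<Rightarrow> real \<Rightarrow> real \<Rightarrow> real" where
  "d_v f t a v = deriv (\<lambda>w. f t a w) v"

definition d_vv :: "(real \<Rightarrow> real \<Rightarrow> real \<Rightarrow> real) \<Rightarrow> real \<Rightarrow> real \<Rightarrow> real \<Rightarrow> real" where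
  "d_vv f t a v = deriv (\<lambda>w. d_v f t a w) v"

definition left_deriv :: "(real \<Rightarrow> real) \<Rightarrow> real \<Rightarrow> real" where
  "left_deriv f x = (THE D. (f has_real_derivative D) (at_left x))"

text \<open>f(t,0,v) = c * delta(v - vr), understood weakly: for every bounded continuous
  test function g on (-inf,1], the integral of f(t,a,.) g tends to c g(vr) as a -> 0+.\<close>
definition weak_reset :: "(real \<Rightarrow> real \<Rightarrow> real \<Rightarrow> real) \<Rightarrow> real \<Rightarrow> real \<Rightarrow> real \<Rightarrow> bool" where
  "weak_reset f vr c t \<longleftrightarrow>
     (\<forall>g. continuous_on {..1} g \<and> bounded (g ` {..1}) \<longrightarrow>
        ((\<lambda>a. LINT v:{..1}|lborel. f t a v * g v) \<longlongrightarrow> c * g vr) (at_right 0))"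

definition fp_solution ::
  "(real \<Rightarrow> real) \<Rightarrow> real \<Rightarrow> (real \<Rightarrow> real \<Rightarrow> real \<Rightarrow> real) \<Rightarrow> bool" where
  "fp_solution \<mu> \<sigma> f \<longleftrightarrow>
     (\<forall>t>0. \<forall>a>0. \<forall>v<1.
        (\<lambda>s. f s a v) differentiable (at t) \<and>
        (\<lambda>b. f t b v) differentiable (at a) \<and>
        (\<lambda>w. f t a w) differentiable (at v) \<and>
        (\<lambda>w. d_v f t a w) differentiable (at v) \<and>
        d_t f t a v + d_a f t a v + deriv (\<lambda>w. (\<mu> t - w) * f t a w) v
          - \<sigma>\<^sup>2 / 2 * d_vv f t a v = 0) \<and>
     (\<forall>t>0. \<forall>a>0. f t a 1 = 0) \<and>
     (\<forall>t>0. \<forall>a>0.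
        ((\<lambda>v. (v - \<mu> t) * f t a v + \<sigma>\<^sup>2 / 2 * d_v f t a v) \<longlongrightarrow> 0) at_bot)"

definition afpt_solution :: "real \<Rightarrow> real \<Rightarrow> real \<Rightarrow> (real \<Rightarrow> real \<Rightarrow> real) \<Rightarrow> bool" where
  "afpt_solution m \<sigma> vr f \<longleftrightarrow>
     (\<forall>a>0. \<forall>v<1.
        (\<lambda>b. f b v) differentiable (at a) \<and>
        (\<lambda>w. f a w) differentiable (at v) \<and>
        (\<lambda>w. deriv (\<lambda>u. f a u) w) differentiable (at v) \<and>
        deriv (\<lambda>b. f b v) a + deriv (\<lambda>w. (m - w) * f a w) v
          - \<sigma>\<^sup>2 / 2 * deriv (\<lambda>w. deriv (\<lambda>u. f a u) w) v = 0) \<and>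
     (\<forall>a>0. f a 1 = 0) \<and>
     (\<forall>a>0. ((\<lambda>v. (v - m) * f a v + \<sigma>\<^sup>2 / 2 * deriv (\<lambda>u. f a u) v) \<longlongrightarrow> 0) at_bot) \<and>
     (\<forall>g. continuous_on {..1} g \<and> bounded (g ` {..1}) \<longrightarrow>
        ((\<lambda>a. LINT v:{..1}|lborel. f a v * g v) \<longlongrightarrow> g vr) (at_right 0))"

definition Psurv :: "(real \<Rightarrow> real \<Rightarrow> real \<Rightarrow> real) \<Rightarrow> real \<Rightarrow> real \<Rightarrow> real" where
  "Psurv f t a = (LINT v:{..1}|lborel. f t a v)"

definition ISI :: "real \<Rightarrow> (real \<Rightarrow> real \<Rightarrow> real \<Rightarrow> real) \<Rightarrow> real \<Rightarrow> real \<Rightarrow> real" where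
  "ISI \<sigma> f t a = - (\<sigma>\<^sup>2 / 2) * left_deriv (\<lambda>v. f t a v) 1"

definition hazard :: "real \<Rightarrow> (real \<Rightarrow> real \<Rightarrow> real \<Rightarrow> real) \<Rightarrow> real \<Rightarrow> real \<Rightarrow> real" where
  "hazard \<sigma> f t a = ISI \<sigma> f t a / Psurv f t a"

end

theory Submission
  imports Defs
begin

lemma ftc_improper:
  fixes G g :: "real \<Rightarrow> real"
  assumes D: "\<And>x. x < 1 \<Longrightarrow> (G has_real_derivative g x) (at x)"
    and I: "set_integrable lborel {..<1} g"
    and B: "(G \<longlongrightarrow> 0) at_bot"
  shows "(G \<longlongrightarrow> (LINT v:{..<1}|lborel. g v)) (at_left 1)"
proof -
  have ftc: "(LINT v:{y..x}|lborel. g v) = G x - G y" if "y \<le> x" "x < 1" for x y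
  proof -
    have si: "set_integrable lborel {y..x} g"
      by (rule set_integrable_subset[OF I]) (use that in auto)
    have "(g has_integral (G x - G y)) {y..x}"
    proof (rule fundamental_theorem_of_calculus[OF \<open>y \<le> x\<close>])
      fix z assume "z \<in> {y..x}"
      then have "z < 1" using that by auto
      show "(G has_vector_derivative g z) (at z within {y..x})"
        unfolding has_real_derivative_iff_has_vector_derivative[symmetric]
        by (rule has_field_derivative_at_within[OF D[OF \<open>z < 1\<close>]])
    qed
    then show ?thesis using set_borel_integral_eq_integral(2)[OF si] by (simp add: integral_unique)
  qed
  have I0: "set_integrable lborel {..0} g"
    by (rule set_integrable_subset[OF I]) auto
  have "((\<lambda>y. LINT v:{y..0}|lborel. g v) \<longlongrightarrow> (LINT v:{..0}|lborel. g v)) at_bot"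
    by (rule tendsto_set_lebesgue_integral_at_bot[OF _ I0]) auto
  moreover have "eventually (\<lambda>y. (LINT v:{y..0}|lborel. g v) = G 0 - G y) at_bot"
    using eventually_le_at_bot[of 0] by eventually_elim (rule ftc, auto)
  ultimately have "((\<lambda>y. G 0 - G y) \<longlongrightarrow> (LINT v:{..0}|lborel. g v)) at_bot"
    by (rule Lim_transform_eventually)
  moreover have "((\<lambda>y. G 0 - G y) \<longlongrightarrow> G 0 - 0) at_bot"
    by (intro tendsto_intros B)
  ultimately have G0: "G 0 = (LINT v:{..0}|lborel. g v)"
    using tendsto_unique[OF trivial_limit_at_bot_linorder] by fastforce
  have I1: "set_integrable lborel {0..<1} g"
    by (rule set_integrable_subset[OF I]) auto
  have "((\<lambda>x. LINT v:{0..x}|lborel. g v) \<longlongrightarrow> (LINT v:{0..<1}|lborel. g v)) (at_left 1)"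
    by (rule tendsto_set_lebesgue_integral_at_left[OF _ _ I1]) auto
  moreover have "eventually (\<lambda>x. (LINT v:{0..x}|lborel. g v) = G x - G 0) (at_left (1::real))"
    using eventually_at_left_real[of "0::real" 1, OF zero_less_one] by eventually_elim (rule ftc, auto)
  ultimately have "((\<lambda>x. G x - G 0) \<longlongrightarrow> (LINT v:{0..<1}|lborel. g v)) (at_left 1)"
    by (rule Lim_transform_eventually)
  then have "((\<lambda>x. (G x - G 0) + G 0) \<longlongrightarrow> (LINT v:{0..<1}|lborel. g v) + G 0) (at_left 1)"
    by (intro tendsto_intros)
  moreover have "(LINT v:{0..<1}|lborel. g v) + G 0 = (LINT v:{..<1}|lborel. g v)"
  proof -
    have "(LINT v:{..0} \<union> {0..<1}|lborel. g v) = (LINT v:{..0}|lborel. g v) + (LINT v:{0..<1}|lborel. g v)"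
      by (rule set_integral_Un_AE[OF _ _ _ I0 I1])
         (auto intro: eventually_mono[OF AE_lborel_singleton[of 0]])
    moreover have "{..0} \<union> {0..<1} = {..<(1::real)}" by auto
    ultimately show ?thesis using G0 by simp
  qed
  ultimately show ?thesis by simp
qed

lemma deriv_limit_left:
  fixes f f' :: "real \<Rightarrow> real"
  assumes dl: "f differentiable (at_left 1)" and f1: "f 1 = 0"
    and D: "\<And>x. x < 1 \<Longrightarrow> (f has_real_derivative f' x) (at x)"
    and L: "(f' \<longlongrightarrow> L) (at_left 1)"
  shows "left_deriv f 1 = L"
proof -
  obtain D0 where D0: "(f has_real_derivative D0) (at_left 1)"
    using dl by (auto simp: real_differentiable_def)
  have "continuous (at_left 1) f" using DERIV_continuous[OF D0] .
  then have fc: "(f \<longlongrightarrow> 0) (at_left 1)"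
    using f1 by (simp add: continuous_within)
  have "((\<lambda>x. f x / (x - 1)) \<longlongrightarrow> L) (at_left 1)"
  proof (rule lhopital_left[where f' = f' and g' = "\<lambda>_. 1"])
    show "(f \<longlongrightarrow> 0) (at_left 1)" by (rule fc)
    show "((\<lambda>x. x - 1) \<longlongrightarrow> 0) (at_left (1::real))"
      by (rule tendsto_eq_intros | simp)+
    show "eventually (\<lambda>x. x - 1 \<noteq> 0) (at_left (1::real))"
      by (simp add: eventually_at_filter)
    show "eventually (\<lambda>x. (1::real) \<noteq> 0) (at_left 1)" by simp
    show "eventually (\<lambda>x. DERIV f x :> f' x) (at_left 1)"
      using eventually_at_left_real[of "0::real" 1, OF zero_less_one] by eventually_elim (auto intro: D)
    show "eventually (\<lambda>x. DERIV (\<lambda>x. x - 1) x :> 1) (at_left (1::real))"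
      by (intro always_eventually allI) (auto intro!: derivative_eq_intros)
    show "((\<lambda>x. f' x / 1) \<longlongrightarrow> L) (at_left 1)" using L by simp
  qed
  then have DL: "(f has_real_derivative L) (at_left 1)"
    unfolding has_field_derivative_iff using f1 by simp
  show ?thesis
    unfolding left_deriv_def
    apply (rule the_equality) apply (rule DL) apply (erule has_field_derivative_unique[OF _ DL]) apply simp done
qed

lemma left_deriv_cmult:
  fixes f :: "real \<Rightarrow> real"
  assumes "f differentiable (at_left 1)"
  shows "left_deriv (\<lambda>v. c * f v) 1 = c * left_deriv f 1"
proof -
  obtain D where D: "(f has_real_derivative D) (at_left 1)"
    using assms by (auto simp: real_differentiable_def)
  have lf: "left_deriv f 1 = D"
    unfolding left_deriv_def
    apply (rule the_equality) apply (rule D) apply (erule has_field_derivative_unique[OF _ D]) apply simp done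
  have D2: "((\<lambda>v. c * f v) has_real_derivative c * D) (at_left 1)"
    by (rule DERIV_cmult[OF D])
  show ?thesis unfolding lf
    unfolding left_deriv_def
    apply (rule the_equality) apply (rule D2) apply (erule has_field_derivative_unique[OF _ D2]) apply simp done
qed


lemma flux:
  fixes \<mu> :: "real \<Rightarrow> real" and \<phi> :: "real \<Rightarrow> real \<Rightarrow> real \<Rightarrow> real"
  assumes fp: "fp_solution \<mu> \<sigma> \<phi>" and t: "t > 0" and a: "a > 0" and sig: "\<sigma> > 0"
    and ti: "set_integrable lborel {..<1} (d_t \<phi> t a)"
    and ai: "set_integrable lborel {..<1} (d_a \<phi> t a)"
    and ld: "(\<lambda>v. \<phi> t a v) differentiable (at_left 1)"
  shows "(LINT v:{..<1}|lborel. d_t \<phi> t a v) + (LINT v:{..<1}|lborel. d_a \<phi> t a v)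
           = \<sigma>\<^sup>2 / 2 * left_deriv (\<lambda>v. \<phi> t a v) 1"
proof -
  have pde: "\<And>w. w < 1 \<Longrightarrow> (\<lambda>w. \<phi> t a w) differentiable (at w) \<and>
        (\<lambda>w. d_v \<phi> t a w) differentiable (at w) \<and>
        d_t \<phi> t a w + d_a \<phi> t a w + deriv (\<lambda>u. (\<mu> t - u) * \<phi> t a u) w
          - \<sigma>\<^sup>2 / 2 * d_vv \<phi> t a w = 0"
    using fp t a unfolding fp_solution_def by blast
  have abs1: "\<phi> t a 1 = 0" using fp t a unfolding fp_solution_def by blast
  have nf: "((\<lambda>v. (v - \<mu> t) * \<phi> t a v + \<sigma>\<^sup>2 / 2 * d_v \<phi> t a v) \<longlongrightarrow> 0) at_bot"
    using fp t a unfolding fp_solution_def by blast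
  have D1: "((\<lambda>w. \<phi> t a w) has_real_derivative d_v \<phi> t a w) (at w)" if "w < 1" for w
    using pde[OF that] unfolding d_v_def by (simp add: DERIV_deriv_iff_real_differentiable)
  have D2: "((\<lambda>w. d_v \<phi> t a w) has_real_derivative d_vv \<phi> t a w) (at w)" if "w < 1" for w
    using pde[OF that] unfolding d_vv_def by (simp add: DERIV_deriv_iff_real_differentiable)
  define G where "G w = (w - \<mu> t) * \<phi> t a w + \<sigma>\<^sup>2 / 2 * d_v \<phi> t a w" for w
  define g where "g w = d_t \<phi> t a w + d_a \<phi> t a w" for w
  have GD: "(G has_real_derivative g w) (at w)" if "w < 1" for w
  proof -
    have Dm: "((\<lambda>u. (\<mu> t - u) * \<phi> t a u) has_real_derivative (\<mu> t - w) * d_v \<phi> t a w + (0 - 1) * \<phi> t a w) (at w)"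
      by (rule DERIV_mult'[OF DERIV_diff[OF DERIV_const DERIV_ident] D1[OF that]])
    have "deriv (\<lambda>u. (\<mu> t - u) * \<phi> t a u) w = (\<mu> t - w) * d_v \<phi> t a w + (0 - 1) * \<phi> t a w"
      by (rule DERIV_imp_deriv[OF Dm])
    note deq = this
    have e: "d_t \<phi> t a w + d_a \<phi> t a w + deriv (\<lambda>u. (\<mu> t - u) * \<phi> t a u) w
          - \<sigma>\<^sup>2 / 2 * d_vv \<phi> t a w = 0" using pde[OF that] by blast
    have ge: "g w = \<phi> t a w - (\<mu> t - w) * d_v \<phi> t a w + \<sigma>\<^sup>2 / 2 * d_vv \<phi> t a w"
      using e unfolding deq g_def by simp
    have "(G has_real_derivative (w - \<mu> t) * d_v \<phi> t a w + (1 - 0) * \<phi> t a w + \<sigma>\<^sup>2 / 2 * d_vv \<phi> t a w) (at w)"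
      unfolding G_def
      by (rule DERIV_add[OF DERIV_mult'[OF DERIV_diff[OF DERIV_ident DERIV_const] D1[OF that]] DERIV_cmult[OF D2[OF that]]])
    then show ?thesis by (rule DERIV_cong) (use ge in \<open>simp add: algebra_simps\<close>)
  qed
  have gi: "set_integrable lborel {..<1} g"
    unfolding g_def using ti ai by (rule set_integral_add(1))
  have gI: "(LINT v:{..<1}|lborel. g v) = (LINT v:{..<1}|lborel. d_t \<phi> t a v) + (LINT v:{..<1}|lborel. d_a \<phi> t a v)"
    unfolding g_def using ti ai by (rule set_integral_add(2))
  have G0: "(G \<longlongrightarrow> 0) at_bot" using nf unfolding G_def .
  have GL: "(G \<longlongrightarrow> (LINT v:{..<1}|lborel. g v)) (at_left 1)"
    by (rule ftc_improper[OF GD gi G0])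
  obtain D0 where D0: "((\<lambda>v. \<phi> t a v) has_real_derivative D0) (at_left 1)"
    using ld by (auto simp: real_differentiable_def)
  have "continuous (at_left 1) (\<lambda>v. \<phi> t a v)" using DERIV_continuous[OF D0] .
  then have fc: "((\<lambda>v. \<phi> t a v) \<longlongrightarrow> 0) (at_left 1)"
    using abs1 by (simp add: continuous_within)
  have "((\<lambda>w. (G w - (w - \<mu> t) * \<phi> t a w) * (2 / \<sigma>\<^sup>2)) \<longlongrightarrow>
          ((LINT v:{..<1}|lborel. g v) - (1 - \<mu> t) * 0) * (2 / \<sigma>\<^sup>2)) (at_left 1)"
    by (intro tendsto_intros GL fc)
  moreover have "\<And>w. (G w - (w - \<mu> t) * \<phi> t a w) * (2 / \<sigma>\<^sup>2) = d_v \<phi> t a w"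
    unfolding G_def using sig by (simp add: field_simps)
  ultimately have dvL: "((\<lambda>w. d_v \<phi> t a w) \<longlongrightarrow> (LINT v:{..<1}|lborel. g v) * (2 / \<sigma>\<^sup>2)) (at_left 1)"
    by simp
  have "left_deriv (\<lambda>v. \<phi> t a v) 1 = (LINT v:{..<1}|lborel. g v) * (2 / \<sigma>\<^sup>2)"
    by (rule deriv_limit_left[OF ld abs1 D1 dvL])
  then show ?thesis using gI sig by (simp add: field_simps)
qed

theorem theorem4:
  fixes \<mu> :: "real \<Rightarrow> real" and \<sigma> vr :: real
    and \<phi> :: "real \<Rightarrow> real \<Rightarrow> real \<Rightarrow> real"
    and \<phi>0 :: "real \<Rightarrow> real \<Rightarrow> real"
    and n :: "real \<Rightarrow> real \<Rightarrow> real"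
    and \<pi> :: "real \<Rightarrow> real \<Rightarrow> real \<Rightarrow> real"
  assumes sigma_pos: "\<sigma> > 0" and vr_lt: "vr < 1"
    (* phi solves NFPT *)
    and phi_fp: "fp_solution \<mu> \<sigma> \<phi>"
    and phi_reset: "\<forall>t>0. weak_reset \<phi> vr 1 t"
    and phi0_sol: "afpt_solution (\<mu> 0) \<sigma> vr \<phi>0"
    and phi_init: "\<forall>a>0. \<forall>v\<le>1. \<phi> 0 a v = \<phi>0 a v"
    (* regularity: integrability, differentiation under the integral sign,
       and existence of the one-sided derivative at the threshold *)
    and phi_int: "\<forall>t>0. \<forall>a>0. set_integrable lborel {..1} (\<phi> t a)"
    and phi_t_int: "\<forall>t>0. \<forall>a>0. set_integrable lborel {..<1} (d_t \<phi> t a)"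
    and phi_a_int: "\<forall>t>0. \<forall>a>0. set_integrable lborel {..<1} (d_a \<phi> t a)"
    and P_deriv_t: "\<forall>t>0. \<forall>a>0.
          ((\<lambda>s. Psurv \<phi> s a) has_real_derivative (LINT v:{..<1}|lborel. d_t \<phi> t a v)) (at t)"
    and P_deriv_a: "\<forall>t>0. \<forall>a>0.
          ((\<lambda>b. Psurv \<phi> t b) has_real_derivative (LINT v:{..<1}|lborel. d_a \<phi> t a v)) (at a)"
    and phi_left_diff: "\<forall>t>0. \<forall>a>0. (\<lambda>v. \<phi> t a v) differentiable (at_left 1)"
    and P_pos: "\<forall>t>0. \<forall>a>0. Psurv \<phi> t a > 0"
    (* n solves the age-structured system *)
    and n_diff: "\<forall>t>0. \<forall>a>0. (\<lambda>s. n s a) differentiable (at t) \<and> (\<lambda>b. n t b) differentiable (at a)"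
    and n_eq: "\<forall>t>0. \<forall>a>0. deriv (\<lambda>s. n s a) t + deriv (\<lambda>b. n t b) a + hazard \<sigma> \<phi> t a * n t a = 0"
    and n_cont: "\<forall>t>0. continuous_on {0..} (n t)"
    and n_int: "\<forall>t>0. set_integrable lborel {0<..} (\<lambda>a. hazard \<sigma> \<phi> t a * n t a)"
    and n_bc: "\<forall>t>0. n t 0 = (LINT a:{0<..}|lborel. hazard \<sigma> \<phi> t a * n t a)"
    (* definition of pi *)
    and pi_def: "\<forall>t a v. \<pi> t a v = \<phi> t a v / Psurv \<phi> t a * n t a"
  shows "fp_solution \<mu> \<sigma> \<pi> \<and>
         (\<forall>t>0. \<forall>a>0. (\<lambda>v. \<pi> t a v) differentiable (at_left 1)) \<and>
         (\<forall>t>0. weak_reset \<pi> vr (LINT a:{0<..}|lborel. hazard \<sigma> \<phi> t a * n t a) t) \<and>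
         (\<forall>t>0. (LINT a:{0<..}|lborel. hazard \<sigma> \<phi> t a * n t a)
                = (LINT a:{0<..}|lborel. - (\<sigma>\<^sup>2 / 2) * left_deriv (\<lambda>v. \<pi> t a v) 1))"
proof -
  have piE: "\<pi> = (\<lambda>t a v. n t a / Psurv \<phi> t a * \<phi> t a v)"
    using pi_def by (auto simp: fun_eq_iff ac_simps)
  have LDc: "left_deriv (\<lambda>v. \<pi> t a v) 1 = n t a / Psurv \<phi> t a * left_deriv (\<lambda>v. \<phi> t a v) 1"
    if "t > 0" "a > 0" for t a
    unfolding piE by (rule left_deriv_cmult) (use phi_left_diff that in auto)
  have fp: "fp_solution \<mu> \<sigma> \<pi>"
    unfolding fp_solution_def
  proof (intro conjI allI impI)
    fix t a v :: real assume t: "t > 0" and a: "a > 0" and v: "v < 1"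
    define P where "P = Psurv \<phi> t a"
    define N where "N = n t a"
    define c where "c = N / P"
    have Ppos: "P > 0" using P_pos t a unfolding P_def by blast
    have pde: "\<And>w. w < 1 \<Longrightarrow> (\<lambda>s. \<phi> s a w) differentiable (at t) \<and>
        (\<lambda>b. \<phi> t b w) differentiable (at a) \<and>
        (\<lambda>w. \<phi> t a w) differentiable (at w) \<and>
        (\<lambda>w. d_v \<phi> t a w) differentiable (at w) \<and>
        d_t \<phi> t a w + d_a \<phi> t a w + deriv (\<lambda>u. (\<mu> t - u) * \<phi> t a u) w
          - \<sigma>\<^sup>2 / 2 * d_vv \<phi> t a w = 0"
      using phi_fp t a unfolding fp_solution_def by blast
    have D1: "((\<lambda>w. \<phi> t a w) has_real_derivative d_v \<phi> t a w) (at w)" if "w < 1" for w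
      using pde[OF that] unfolding d_v_def by (simp add: DERIV_deriv_iff_real_differentiable)
    have D2: "((\<lambda>w. d_v \<phi> t a w) has_real_derivative d_vv \<phi> t a w) (at w)" if "w < 1" for w
      using pde[OF that] unfolding d_vv_def by (simp add: DERIV_deriv_iff_real_differentiable)
    have Dt: "((\<lambda>s. \<phi> s a v) has_real_derivative d_t \<phi> t a v) (at t)"
      using pde[OF v] unfolding d_t_def by (simp add: DERIV_deriv_iff_real_differentiable)
    have Da: "((\<lambda>b. \<phi> t b v) has_real_derivative d_a \<phi> t a v) (at a)"
      using pde[OF v] unfolding d_a_def by (simp add: DERIV_deriv_iff_real_differentiable)
    define nt where "nt = deriv (\<lambda>s. n s a) t"
    define na where "na = deriv (\<lambda>b. n t b) a"
    have Dnt: "((\<lambda>s. n s a) has_real_derivative nt) (at t)"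
      using n_diff t a unfolding nt_def by (simp add: DERIV_deriv_iff_real_differentiable)
    have Dna: "((\<lambda>b. n t b) has_real_derivative na) (at a)"
      using n_diff t a unfolding na_def by (simp add: DERIV_deriv_iff_real_differentiable)
    define Pt where "Pt = (LINT v:{..<1}|lborel. d_t \<phi> t a v)"
    define Pa where "Pa = (LINT v:{..<1}|lborel. d_a \<phi> t a v)"
    have DPt: "((\<lambda>s. Psurv \<phi> s a) has_real_derivative Pt) (at t)"
      using P_deriv_t t a unfolding Pt_def by blast
    have DPa: "((\<lambda>b. Psurv \<phi> t b) has_real_derivative Pa) (at a)"
      using P_deriv_a t a unfolding Pa_def by blast
    define LD where "LD = left_deriv (\<lambda>v. \<phi> t a v) 1"
    have fl: "Pt + Pa = \<sigma>\<^sup>2 / 2 * LD"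
      unfolding Pt_def Pa_def LD_def
      by (rule flux[OF phi_fp t a sigma_pos]) (use phi_t_int phi_a_int phi_left_diff t a in auto)
    have neq: "nt + na + (- (\<sigma>\<^sup>2 / 2) * LD / P) * N = 0"
      using n_eq t a unfolding nt_def na_def N_def P_def LD_def hazard_def ISI_def by simp
    have XT: "((\<lambda>s. \<pi> s a v) has_real_derivative
        ((nt * P - N * Pt) / (P * P)) * \<phi> t a v + N / P * d_t \<phi> t a v) (at t)"
    proof -
      have "((\<lambda>s. n s a / Psurv \<phi> s a * \<phi> s a v) has_real_derivative
        ((nt * P - N * Pt) / (P * P)) * \<phi> t a v + d_t \<phi> t a v * (N / P)) (at t)"
        using DERIV_mult[OF DERIV_divide[OF Dnt DPt] Dt] Ppos unfolding P_def N_def by simp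
      then show ?thesis unfolding piE by (simp add: ac_simps)
    qed
    have XA: "((\<lambda>b. \<pi> t b v) has_real_derivative
        ((na * P - N * Pa) / (P * P)) * \<phi> t a v + N / P * d_a \<phi> t a v) (at a)"
    proof -
      have "((\<lambda>b. n t b / Psurv \<phi> t b * \<phi> t b v) has_real_derivative
        ((na * P - N * Pa) / (P * P)) * \<phi> t a v + d_a \<phi> t a v * (N / P)) (at a)"
        using DERIV_mult[OF DERIV_divide[OF Dna DPa] Da] Ppos unfolding P_def N_def by simp
      then show ?thesis unfolding piE by (simp add: ac_simps)
    qed
    have piw: "(\<lambda>w. \<pi> t a w) = (\<lambda>w. c * \<phi> t a w)"
      unfolding piE c_def N_def P_def by simp
    have XV: "((\<lambda>w. \<pi> t a w) has_real_derivative c * d_v \<phi> t a w) (at w)" if "w < 1" for w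
      unfolding piw by (rule DERIV_cmult[OF D1[OF that]])
    have dvpi: "d_v \<pi> t a w = c * d_v \<phi> t a w" if "w < 1" for w
      unfolding d_v_def by (rule DERIV_imp_deriv[OF XV[OF that], unfolded d_v_def])
    have ev: "eventually (\<lambda>w. w < 1) (nhds v)"
      using eventually_nhds_in_open[of "{..<1}" v] v by auto
    have XVV: "((\<lambda>w. d_v \<pi> t a w) has_real_derivative c * d_vv \<phi> t a v) (at v)"
    proof -
      have "((\<lambda>w. c * d_v \<phi> t a w) has_real_derivative c * d_vv \<phi> t a v) (at v)"
        by (rule DERIV_cmult[OF D2[OF v]])
      moreover have "eventually (\<lambda>w. c * d_v \<phi> t a w = d_v \<pi> t a w) (nhds v)"
        using ev by eventually_elim (simp add: dvpi)
      ultimately show ?thesis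
        using DERIV_cong_ev[of v v "\<lambda>w. c * d_v \<phi> t a w" "\<lambda>w. d_v \<pi> t a w"] by blast
    qed
    show "(\<lambda>s. \<pi> s a v) differentiable (at t)"
      using XT by (auto simp: real_differentiable_def)
    show "(\<lambda>b. \<pi> t b v) differentiable (at a)"
      using XA by (auto simp: real_differentiable_def)
    show "(\<lambda>w. \<pi> t a w) differentiable (at v)"
      using XV[OF v] by (auto simp: real_differentiable_def)
    show "(\<lambda>w. d_v \<pi> t a w) differentiable (at v)"
      using XVV by (auto simp: real_differentiable_def)
    have e1: "d_t \<pi> t a v = ((nt * P - N * Pt) / (P * P)) * \<phi> t a v + N / P * d_t \<phi> t a v"
      unfolding d_t_def[of \<pi>] by (rule DERIV_imp_deriv[OF XT])
    have e2: "d_a \<pi> t a v = ((na * P - N * Pa) / (P * P)) * \<phi> t a v + N / P * d_a \<phi> t a v"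
      unfolding d_a_def[of \<pi>] by (rule DERIV_imp_deriv[OF XA])
    have e4: "d_vv \<pi> t a v = c * d_vv \<phi> t a v"
      unfolding d_vv_def[of \<pi>] by (rule DERIV_imp_deriv[OF XVV])
    have e3: "deriv (\<lambda>w. (\<mu> t - w) * \<pi> t a w) v = (\<mu> t - v) * (c * d_v \<phi> t a v) + (0 - 1) * (c * \<phi> t a v)"
      by (rule DERIV_imp_deriv, unfold piw,
          rule DERIV_mult'[OF DERIV_diff[OF DERIV_const DERIV_ident] DERIV_cmult[OF D1[OF v]]])
    have e3': "deriv (\<lambda>w. (\<mu> t - w) * \<phi> t a w) v = (\<mu> t - v) * d_v \<phi> t a v + (0 - 1) * \<phi> t a v"
      by (rule DERIV_imp_deriv,
          rule DERIV_mult'[OF DERIV_diff[OF DERIV_const DERIV_ident] D1[OF v]])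
    have pv: "d_t \<phi> t a v + d_a \<phi> t a v + ((\<mu> t - v) * d_v \<phi> t a v + (0 - 1) * \<phi> t a v)
          - \<sigma>\<^sup>2 / 2 * d_vv \<phi> t a v = 0"
      using pde[OF v] unfolding e3' by blast
    have "d_t \<pi> t a v + d_a \<pi> t a v + deriv (\<lambda>w. (\<mu> t - w) * \<pi> t a w) v - \<sigma>\<^sup>2 / 2 * d_vv \<pi> t a v
        = c * (d_t \<phi> t a v + d_a \<phi> t a v + ((\<mu> t - v) * d_v \<phi> t a v + (0 - 1) * \<phi> t a v)
          - \<sigma>\<^sup>2 / 2 * d_vv \<phi> t a v) + \<phi> t a v / (P * P) * ((nt + na) * P - N * (Pt + Pa))"
      unfolding e1 e2 e3 e4 c_def using Ppos by (simp add: field_simps)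
    also have "\<dots> = \<phi> t a v / (P * P) * ((nt + na) * P - N * (Pt + Pa))"
      unfolding pv by simp
    also have "(nt + na) * P - N * (Pt + Pa) = 0"
    proof -
      have "nt + na = \<sigma>\<^sup>2 / 2 * LD / P * N" using neq by (simp add: algebra_simps)
      then show ?thesis unfolding fl using Ppos by (simp add: field_simps)
    qed
    finally show "d_t \<pi> t a v + d_a \<pi> t a v + deriv (\<lambda>w. (\<mu> t - w) * \<pi> t a w) v - \<sigma>\<^sup>2 / 2 * d_vv \<pi> t a v = 0"
      by simp
  next
    fix t a :: real assume t: "t > 0" and a: "a > 0"
    show "\<pi> t a 1 = 0" using phi_fp t a unfolding fp_solution_def piE by simp
  next
    fix t a :: real assume t: "t > 0" and a: "a > 0"
    define c where "c = n t a / Psurv \<phi> t a"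
    have nf: "((\<lambda>v. (v - \<mu> t) * \<phi> t a v + \<sigma>\<^sup>2 / 2 * d_v \<phi> t a v) \<longlongrightarrow> 0) at_bot"
      using phi_fp t a unfolding fp_solution_def by blast
    have "((\<lambda>v. c * ((v - \<mu> t) * \<phi> t a v + \<sigma>\<^sup>2 / 2 * d_v \<phi> t a v)) \<longlongrightarrow> c * 0) at_bot"
      by (intro tendsto_intros nf)
    moreover have "eventually (\<lambda>v. c * ((v - \<mu> t) * \<phi> t a v + \<sigma>\<^sup>2 / 2 * d_v \<phi> t a v)
        = (v - \<mu> t) * \<pi> t a v + \<sigma>\<^sup>2 / 2 * d_v \<pi> t a v) at_bot"
      using eventually_le_at_bot[of 0]
    proof eventually_elim
      case (elim v)
      have pw: "(\<lambda>w. \<pi> t a w) = (\<lambda>w. c * \<phi> t a w)" unfolding piE c_def by simp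
      have "d_v \<pi> t a v = deriv (\<lambda>w. c * \<phi> t a w) v" unfolding d_v_def pw ..
      also have "\<dots> = c * d_v \<phi> t a v"
      proof -
        have "(\<lambda>w. \<phi> t a w) differentiable (at v)"
          using phi_fp t a elim unfolding fp_solution_def by auto
        then have "((\<lambda>w. \<phi> t a w) has_real_derivative d_v \<phi> t a v) (at v)"
          unfolding d_v_def by (simp add: DERIV_deriv_iff_real_differentiable)
        then show ?thesis by (rule DERIV_imp_deriv[OF DERIV_cmult])
      qed
      moreover have "\<pi> t a v = c * \<phi> t a v" using fun_cong[OF pw, of v] by simp
      ultimately show ?case by (simp add: algebra_simps)
    qed
    ultimately show "((\<lambda>v. (v - \<mu> t) * \<pi> t a v + \<sigma>\<^sup>2 / 2 * d_v \<pi> t a v) \<longlongrightarrow> 0) at_bot"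
      by (simp add: Lim_transform_eventually)
  qed
  have ld: "\<forall>t>0. \<forall>a>0. (\<lambda>v. \<pi> t a v) differentiable (at_left 1)"
  proof (intro allI impI)
    fix t a :: real assume "t > 0" "a > 0"
    then obtain D where "((\<lambda>v. \<phi> t a v) has_real_derivative D) (at_left 1)"
      using phi_left_diff by (auto simp: real_differentiable_def)
    from DERIV_cmult[OF this, of "n t a / Psurv \<phi> t a"]
    show "(\<lambda>v. \<pi> t a v) differentiable (at_left 1)"
      unfolding piE by (auto simp: real_differentiable_def)
  qed
  have wr: "\<forall>t>0. weak_reset \<pi> vr (LINT a:{0<..}|lborel. hazard \<sigma> \<phi> t a * n t a) t"
  proof (intro allI impI)
    fix t :: real assume t: "t > 0"
    show "weak_reset \<pi> vr (LINT a:{0<..}|lborel. hazard \<sigma> \<phi> t a * n t a) t"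
      unfolding weak_reset_def
    proof (intro allI impI)
      fix g :: "real \<Rightarrow> real" assume g: "continuous_on {..1} g \<and> bounded (g ` {..1})"
      have wr1: "weak_reset \<phi> vr 1 t" using phi_reset t by blast
      have L1: "((\<lambda>a. LINT v:{..1}|lborel. \<phi> t a v * g v) \<longlongrightarrow> 1 * g vr) (at_right 0)"
        using wr1 g unfolding weak_reset_def by blast
      have c1: "continuous_on {..1} (\<lambda>_::real. 1::real) \<and> bounded ((\<lambda>_::real. 1::real) ` {..1})"
      proof
        show "continuous_on {..1} (\<lambda>_::real. 1::real)" by (rule continuous_on_const)
        have "(\<lambda>_::real. 1::real) ` {..1} = {1}" by auto
        then show "bounded ((\<lambda>_::real. 1::real) ` {..1})" by simp
      qed
      have "((\<lambda>a. LINT v:{..1}|lborel. \<phi> t a v * (\<lambda>_. 1) v) \<longlongrightarrow> 1 * (\<lambda>_. 1) vr) (at_right 0)"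
        using wr1 c1 unfolding weak_reset_def by blast
      then have L2: "((\<lambda>a. Psurv \<phi> t a) \<longlongrightarrow> 1) (at_right 0)"
        unfolding Psurv_def by simp
      have "(n t \<longlongrightarrow> n t 0) (at 0 within {0..})"
        using n_cont t unfolding continuous_on_def by auto
      then have L3: "(n t \<longlongrightarrow> n t 0) (at_right 0)"
        by (rule tendsto_within_subset) auto
      have "((\<lambda>a. n t a / Psurv \<phi> t a * (LINT v:{..1}|lborel. \<phi> t a v * g v)) \<longlongrightarrow>
             n t 0 / 1 * (1 * g vr)) (at_right 0)"
        by (intro tendsto_intros L1 L2 L3) simp
      moreover have "\<And>a. (LINT v:{..1}|lborel. \<pi> t a v * g v)
          = n t a / Psurv \<phi> t a * (LINT v:{..1}|lborel. \<phi> t a v * g v)"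
        unfolding piE by (simp add: ac_simps flip: set_integral_mult_right)
      ultimately show "((\<lambda>a. LINT v:{..1}|lborel. \<pi> t a v * g v) \<longlongrightarrow>
          (LINT a:{0<..}|lborel. hazard \<sigma> \<phi> t a * n t a) * g vr) (at_right 0)"
        using n_bc t by simp
    qed
  qed
  have rr: "\<forall>t>0. (LINT a:{0<..}|lborel. hazard \<sigma> \<phi> t a * n t a)
                = (LINT a:{0<..}|lborel. - (\<sigma>\<^sup>2 / 2) * left_deriv (\<lambda>v. \<pi> t a v) 1)"
  proof (intro allI impI)
    fix t :: real assume t: "t > 0"
    show "(LINT a:{0<..}|lborel. hazard \<sigma> \<phi> t a * n t a)
                = (LINT a:{0<..}|lborel. - (\<sigma>\<^sup>2 / 2) * left_deriv (\<lambda>v. \<pi> t a v) 1)"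
      by (rule set_lebesgue_integral_cong)
         (use t LDc in \<open>auto simp: hazard_def ISI_def\<close>)
  qed
  show ?thesis using fp ld wr rr by blast
qed

end
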